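(* Consider a Fisher market with agents $N$, budgets $b_i>0$ for $i\in N$, indivisible items $M$, and monotone preferences $\preceq_i$. For every competitive equilibrium $(\mathcal S,p)$ such that $S_i\ne\emptyset$ for every $i\in N$, there exists a price vector $p'$ such that $(\mathcal S,p')$ is a competitive equilibrium and $p'$ is budget-exhausting, i.e., $p'(S_i)=b_i$ for every $i\in N$.
   Context: A monotone preference $\preceq_i$ is a complete and transitive weak order over all subsets of $M$ such that $S\preceq_i T$ whenever $S\subseteq T$; $S\prec_i T$ means $S\preceq_i T$ and not $T\preceq_i S$. For prices $p$, $p(S)=\sum_{j\in S}p_j$. A bundle $S$ is demanded by agent $i$ if $p(S)\le b_i$ and $p(T)>b_i$ for every $T$ with $S\prec_i T$. A competitive equilibrium is a pair $(\mathcal S,p)$ with $\mathcal S=(S_i)_{i\in N}$ a partition of all of $M$ among the agents such that each $S_i$ is demanded by agent $i$ at prices $p$. *)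

theory Defs
  imports Complex_Main
begin

text \<open>A preference of an agent is a binary relation on bundles (subsets of the item set M);
  R S T reads: S is weakly less preferred than T.\<close>

definition monotone_pref :: "'b set \<Rightarrow> ('b set \<Rightarrow> 'b set \<Rightarrow> bool) \<Rightarrow> bool" where
  "monotone_pref M R \<longleftrightarrow>
     (\<forall>S T. S \<subseteq> M \<longrightarrow> T \<subseteq> M \<longrightarrow> R S T \<or> R T S) \<and>
     (\<forall>S T U. S \<subseteq> M \<longrightarrow> T \<subseteq> M \<longrightarrow> U \<subseteq> M \<longrightarrow> R S T \<longrightarrow> R T U \<longrightarrow> R S U) \<and>
     (\<forall>S T. S \<subseteq> T \<longrightarrow> T \<subseteq> M \<longrightarrow> R S T)"

definition strict_pref :: "('b set \<Rightarrow> 'b set \<Rightarrow> bool) \<Rightarrow> 'b set \<Rightarrow> 'b set \<Rightarrow> bool" where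
  "strict_pref R S T \<longleftrightarrow> R S T \<and> \<not> R T S"

definition price :: "('b \<Rightarrow> real) \<Rightarrow> 'b set \<Rightarrow> real" where
  "price p S = (\<Sum>j\<in>S. p j)"

definition demanded :: "'b set \<Rightarrow> ('b set \<Rightarrow> 'b set \<Rightarrow> bool) \<Rightarrow> real \<Rightarrow> ('b \<Rightarrow> real) \<Rightarrow> 'b set \<Rightarrow> bool" where
  "demanded M R bi p S \<longleftrightarrow> S \<subseteq> M \<and> price p S \<le> bi \<and>
     (\<forall>T. T \<subseteq> M \<longrightarrow> strict_pref R S T \<longrightarrow> price p T > bi)"

definition is_allocation :: "'a set \<Rightarrow> 'b set \<Rightarrow> ('a \<Rightarrow> 'b set) \<Rightarrow> bool" where
  "is_allocation N M S \<longleftrightarrow> (\<Union>i\<in>N. S i) = M \<and>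
     (\<forall>i\<in>N. \<forall>j\<in>N. i \<noteq> j \<longrightarrow> S i \<inter> S j = {})"

definition competitive_equilibrium ::
  "'a set \<Rightarrow> 'b set \<Rightarrow> ('a \<Rightarrow> 'b set \<Rightarrow> 'b set \<Rightarrow> bool) \<Rightarrow> ('a \<Rightarrow> real) \<Rightarrow> ('a \<Rightarrow> 'b set) \<Rightarrow> ('b \<Rightarrow> real) \<Rightarrow> bool" where
  "competitive_equilibrium N M pref b S p \<longleftrightarrow> is_allocation N M S \<and>
     (\<forall>i\<in>N. demanded M (pref i) (b i) p (S i))"

end

theory Submission
  imports Defs
begin

theorem mainTheorem6:
  fixes N :: "'a set" and M :: "'b set"
    and pref :: "'a \<Rightarrow> 'b set \<Rightarrow> 'b set \<Rightarrow> bool"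
    and b :: "'a \<Rightarrow> real" and S :: "'a \<Rightarrow> 'b set" and p :: "'b \<Rightarrow> real"
  assumes "finite N" and "finite M"
    and "\<forall>i\<in>N. b i > 0"
    and "\<forall>i\<in>N. monotone_pref M (pref i)"
    and "competitive_equilibrium N M pref b S p"
    and "\<forall>i\<in>N. S i \<noteq> {}"
  shows "\<exists>p'. competitive_equilibrium N M pref b S p' \<and> (\<forall>i\<in>N. price p' (S i) = b i)"
proof -
  have alloc: "is_allocation N M S" and dem: "\<forall>i\<in>N. demanded M (pref i) (b i) p (S i)"
    using assms(5) unfolding competitive_equilibrium_def by auto
  have SM: "\<And>i. i \<in> N \<Longrightarrow> S i \<subseteq> M" using dem unfolding demanded_def by auto
  have fin: "\<And>i. i \<in> N \<Longrightarrow> finite (S i)" using SM assms(2) finite_subset by blast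
  have disj: "\<And>i k. i \<in> N \<Longrightarrow> k \<in> N \<Longrightarrow> i \<noteq> k \<Longrightarrow> S i \<inter> S k = {}"
    using alloc unfolding is_allocation_def by auto
  define d where "d i = b i - price p (S i)" for i
  have dnn: "\<And>i. i \<in> N \<Longrightarrow> d i \<ge> 0" using dem unfolding demanded_def d_def by auto
  define q where "q j = (\<Sum>i\<in>N. if j \<in> S i then d i / real (card (S i)) else 0)" for j
  define p' where "p' j = p j + q j" for j
  have qnn: "q j \<ge> 0" for j unfolding q_def using dnn by (auto intro!: sum_nonneg)
  have ge: "price p' T \<ge> price p T" for T
    unfolding price_def p'_def using qnn by (simp add: sum.distrib sum_nonneg)
  have qS: "q j = d i / real (card (S i))" if "i \<in> N" "j \<in> S i" for i j
  proof -
    have "q j = (\<Sum>k\<in>N. if k = i then d i / real (card (S i)) else 0)"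
      unfolding q_def using that disj by (intro sum.cong) auto
    also have "\<dots> = d i / real (card (S i))" using that assms(1) by simp
    finally show ?thesis .
  qed
  have eq: "price p' (S i) = b i" if "i \<in> N" for i
  proof -
    have cpos: "card (S i) > 0" using fin[OF that] assms(6) that by (simp add: card_gt_0_iff)
    have "price p' (S i) = price p (S i) + (\<Sum>j\<in>S i. d i / real (card (S i)))"
      unfolding price_def p'_def using qS[OF that] by (simp add: sum.distrib)
    also have "\<dots> = price p (S i) + d i" using cpos by simp
    finally show ?thesis unfolding d_def by simp
  qed
  have "competitive_equilibrium N M pref b S p'"
    unfolding competitive_equilibrium_def demanded_def
  proof (intro conjI ballI allI impI alloc)
    fix i assume i: "i \<in> N"
    show "S i \<subseteq> M" using SM[OF i] .
    show "price p' (S i) \<le> b i" using eq[OF i] by simp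
    fix T assume "T \<subseteq> M" "strict_pref (pref i) (S i) T"
    then have "price p T > b i" using dem i unfolding demanded_def by blast
    then show "price p' T > b i" using ge[of T] by linarith
  qed
  then show ?thesis using eq by blast
qed

end
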